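(* Every Margulis spacetime with a nonabelian fundamental group is orientable.
   Context: Let $\mathbb E^{2,1}$ be three-dimensional Minkowski space, the affine space modeled on $\mathbb R^3$ with a Lorentzian inner product of signature $(2,1)$; its isometries are affine maps with linear part in $\mathrm O(2,1)$. A Margulis spacetime is a quotient $M=\mathbb E^{2,1}/\Gamma$, where $\Gamma$ is a free group of Lorentzian isometries acting properly, freely and discretely on $\mathbb E^{2,1}$ (equivalently a geodesically complete flat Lorentzian $3$-manifold with free fundamental group). *)

theory Defs
  imports "HOL-Analysis.Analysis"
begin

type_synonym pt = "real ^ 3"

definition lor :: "pt \<Rightarrow> pt \<Rightarrow> real" where
  "lor x y = x$1 * y$1 + x$2 * y$2 - x$3 * y$3"

definition O21 :: "(real ^ 3 ^ 3) set" where
  "O21 = {A. \<forall>x y. lor (A *v x) (A *v y) = lor x y}"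

definition lorentz_isometry :: "(pt \<Rightarrow> pt) \<Rightarrow> bool" where
  "lorentz_isometry f \<longleftrightarrow> (\<exists>A b. A \<in> O21 \<and> f = (\<lambda>x. A *v x + b))"

definition isometry_group :: "(pt \<Rightarrow> pt) set \<Rightarrow> bool" where
  "isometry_group G \<longleftrightarrow> (\<forall>g\<in>G. lorentz_isometry g) \<and> id \<in> G \<and>
     (\<forall>g\<in>G. \<forall>h\<in>G. g \<circ> h \<in> G) \<and> (\<forall>g\<in>G. inv g \<in> G)"

fun word_eval :: "(bool \<times> (pt \<Rightarrow> pt)) list \<Rightarrow> (pt \<Rightarrow> pt)" where
  "word_eval [] = id"
| "word_eval ((e, s) # w) = (if e then s else inv s) \<circ> word_eval w"

fun reduced_word :: "(bool \<times> 'a) list \<Rightarrow> bool" where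
  "reduced_word ((e, s) # (e', s') # w) =
     (\<not> (s = s' \<and> e \<noteq> e') \<and> reduced_word ((e', s') # w))"
| "reduced_word _ = True"

definition free_on :: "(pt \<Rightarrow> pt) set \<Rightarrow> (pt \<Rightarrow> pt) set \<Rightarrow> bool" where
  "free_on S G \<longleftrightarrow> S \<subseteq> G \<and>
     G = {word_eval w | w. set (map snd w) \<subseteq> S} \<and>
     (\<forall>w. set (map snd w) \<subseteq> S \<and> reduced_word w \<and> w \<noteq> [] \<longrightarrow> word_eval w \<noteq> id)"

definition free_group :: "(pt \<Rightarrow> pt) set \<Rightarrow> bool" where
  "free_group G \<longleftrightarrow> (\<exists>S. free_on S G)"

definition acts_properly :: "(pt \<Rightarrow> pt) set \<Rightarrow> bool" where
  "acts_properly G \<longleftrightarrow> (\<forall>K. compact K \<longrightarrow> finite {g\<in>G. g ` K \<inter> K \<noteq> {}})"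

definition acts_freely :: "(pt \<Rightarrow> pt) set \<Rightarrow> bool" where
  "acts_freely G \<longleftrightarrow> (\<forall>g\<in>G. \<forall>x. g x = x \<longrightarrow> g = id)"

text \<open>Gamma defines a Margulis spacetime E^{2,1}/Gamma.\<close>
definition margulis_group :: "(pt \<Rightarrow> pt) set \<Rightarrow> bool" where
  "margulis_group G \<longleftrightarrow> isometry_group G \<and> free_group G \<and> acts_properly G \<and> acts_freely G"

definition nonabelian :: "(pt \<Rightarrow> pt) set \<Rightarrow> bool" where
  "nonabelian G \<longleftrightarrow> (\<exists>g\<in>G. \<exists>h\<in>G. g \<circ> h \<noteq> h \<circ> g)"

text \<open>E^{2,1}/Gamma is orientable iff every element of Gamma preserves orientation,
  i.e. its linear part has determinant 1.\<close>
definition orientable_quotient :: "(pt \<Rightarrow> pt) set \<Rightarrow> bool" where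
  "orientable_quotient G \<longleftrightarrow>
     (\<forall>g\<in>G. \<exists>A b. g = (\<lambda>x. A *v x + b) \<and> det A > 0)"

end

theory Submission
  imports Defs
begin


lemma det3_expl: "det (L::real^3^3) = L$1$1*L$2$2*L$3$3 - L$1$1*L$2$3*L$3$2 - L$1$2*L$2$1*L$3$3
   + L$1$2*L$2$3*L$3$1 + L$1$3*L$2$1*L$3$2 - L$1$3*L$2$2*L$3$1"
  by (simp add: det_3)

lemma O21_cols:
  assumes "L \<in> O21"
  shows "L$1$1*L$1$1 + L$2$1*L$2$1 - L$3$1*L$3$1 = 1"
    "L$1$2*L$1$2 + L$2$2*L$2$2 - L$3$2*L$3$2 = 1"
    "L$1$3*L$1$3 + L$2$3*L$2$3 - L$3$3*L$3$3 = -1"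
    "L$1$1*L$1$2 + L$2$1*L$2$2 - L$3$1*L$3$2 = 0"
    "L$1$1*L$1$3 + L$2$1*L$2$3 - L$3$1*L$3$3 = 0"
    "L$1$2*L$1$3 + L$2$2*L$2$3 - L$3$2*L$3$3 = 0"
proof -
  have P: "lor (L *v axis i 1) (L *v axis j 1) = lor (axis i 1) (axis j 1)" for i j
    using assms unfolding O21_def by blast
  show "L$1$1*L$1$1 + L$2$1*L$2$1 - L$3$1*L$3$1 = 1" using P[of 1 1]
    by (simp add: lor_def matrix_vector_mult_def sum_3 axis_def)
  show "L$1$2*L$1$2 + L$2$2*L$2$2 - L$3$2*L$3$2 = 1" using P[of 2 2]
    by (simp add: lor_def matrix_vector_mult_def sum_3 axis_def)
  show "L$1$3*L$1$3 + L$2$3*L$2$3 - L$3$3*L$3$3 = -1" using P[of 3 3]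
    by (simp add: lor_def matrix_vector_mult_def sum_3 axis_def)
  show "L$1$1*L$1$2 + L$2$1*L$2$2 - L$3$1*L$3$2 = 0" using P[of 1 2]
    by (simp add: lor_def matrix_vector_mult_def sum_3 axis_def)
  show "L$1$1*L$1$3 + L$2$1*L$2$3 - L$3$1*L$3$3 = 0" using P[of 1 3]
    by (simp add: lor_def matrix_vector_mult_def sum_3 axis_def)
  show "L$1$2*L$1$3 + L$2$2*L$2$3 - L$3$2*L$3$3 = 0" using P[of 2 3]
    by (simp add: lor_def matrix_vector_mult_def sum_3 axis_def)
qed

definition Xm :: "real^3^3 \<Rightarrow> real^3^3" where
  "Xm L = (\<chi> i j. (if i = 3 then -1 else 1) * (if j = 3 then -1 else 1) * L$j$i)"

lemma Xm_left: assumes "L \<in> O21" shows "Xm L ** L = mat 1"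
  using O21_cols[OF assms]
  by (simp add: Xm_def matrix_matrix_mult_def sum_3 vec_eq_iff forall_3 mat_def algebra_simps)

lemma CH3: fixes L :: "real^3^3"
  shows "L**L**L - (L$1$1+L$2$2+L$3$3) *\<^sub>R (L**L)
    + ((L$2$2*L$3$3 - L$2$3*L$3$2) + (L$1$1*L$3$3 - L$1$3*L$3$1) + (L$1$1*L$2$2 - L$1$2*L$2$1)) *\<^sub>R L
    - det L *\<^sub>R mat 1 = 0"
  by (simp add: det3_expl matrix_matrix_mult_def sum_3 vec_eq_iff forall_3 mat_def algebra_simps)

lemma mm_add_r: "((A::real^'n^'m) + B) ** (C::real^'p^'n) = A ** C + B ** C"
  by (vector matrix_matrix_mult_def sum.distrib[symmetric] field_simps)
lemma mm_sub_l: "(A::real^'n^'m) ** ((B::real^'p^'n) - C) = A ** B - A ** C"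
  by (vector matrix_matrix_mult_def sum_subtractf[symmetric] field_simps)

lemma det_plus_minus: fixes L :: "real^3^3"
  shows "det (L + mat 1) + det (L - mat 1) = 2*(L$1$1+L$2$2+L$3$3) + 2 * det L"
    "det (L + mat 1) - det (L - mat 1) = 2 + 2*((L$2$2*L$3$3 - L$2$3*L$3$2) + (L$1$1*L$3$3 - L$1$3*L$3$1) + (L$1$1*L$2$2 - L$1$2*L$2$1))"
  by (simp_all add: det3_expl mat_def algebra_simps)

lemma det_Xm_plus: "det (Xm L + mat 1) = det (L + mat 1)"
  by (simp add: det3_expl mat_def Xm_def algebra_simps)

lemma refl_sq:
  fixes L :: "real^3^3"
  assumes O: "L \<in> O21" and d: "det L = -1" and u: "u \<noteq> 0" "L *v u = u"
  shows "L ** L = mat 1"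
proof -
  let ?X = "Xm L"
  have XL: "?X ** L = mat 1" by (rule Xm_left[OF O])
  have "(?X + mat 1) ** L = mat 1 + L" using XL by (simp add: mm_add_r)
  hence "det (L + mat 1) = det (?X + mat 1) * det L" by (metis det_mul add.commute)
  hence dp: "det (L + mat 1) = 0" using d det_Xm_plus[of L] by simp
  have "(L - mat 1) *v u = 0" using u by (simp add: matrix_vector_mult_diff_rdistrib)
  hence "\<not> inj ((*v) (L - mat 1))" using u unfolding vec.inj_iff_eq_0 by blast
  hence "\<not> invertible (L - mat 1)" using inj_matrix_vector_mult by blast
  hence dm: "det (L - mat 1) = 0" using invertible_det_nz by blast
  have t: "L$1$1+L$2$2+L$3$3 = 1" using det_plus_minus(1)[of L] dp dm d by simp
  have s: "(L$2$2*L$3$3 - L$2$3*L$3$2) + (L$1$1*L$3$3 - L$1$3*L$3$1) + (L$1$1*L$2$2 - L$1$2*L$2$1) = -1"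
    using det_plus_minus(2)[of L] dp dm by simp
  have C: "L**L**L - L**L - L + mat 1 = 0" using CH3[of L] unfolding t s d by simp
  have "?X ** (L**L**L - L**L - L + mat 1) = L**L - L - mat 1 + ?X"
    proof -
      have XLM: "?X ** (L ** M) = M" for M :: "real^3^3" by (simp add: matrix_mul_assoc XL)
      have "?X ** (L ** L ** L) = L ** L" by (metis matrix_mul_assoc XLM)
      thus ?thesis by (simp add: mm_sub_l matrix_add_ldistrib XLM XL)
    qed
  hence X: "?X = mat 1 + L - L**L" using C by (simp add: algebra_simps)
  have KK: "(L**L - mat 1) ** (L**L - mat 1) = (L + mat 1) ** (L**L**L - L**L - L + mat 1)"
    by (simp add: matrix_matrix_mult_def sum_3 vec_eq_iff forall_3 mat_def algebra_simps)
  have LX: "L - ?X = L**L - mat 1" using X by (simp add: algebra_simps)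
  have KK0: "(L - ?X) ** (L - ?X) = 0" unfolding LX KK C by simp
  define K where "K = L - ?X"
  have K11: "K$1$1 = 0" "K$2$2 = 0" "K$3$3 = 0" by (simp_all add: K_def Xm_def)
  have Ks: "K$2$1 = - K$1$2" "K$3$1 = K$1$3" "K$3$2 = K$2$3" by (simp_all add: K_def Xm_def)
  have "(K**K)$3$3 = 0" "(K**K)$1$1 = 0" using KK0 unfolding K_def by simp_all
  hence e33: "K$1$3*K$1$3 + K$2$3*K$2$3 = 0" and e11: "- K$1$2*K$1$2 + K$1$3*K$1$3 = 0"
    using K11 Ks by (simp_all add: matrix_matrix_mult_def sum_3)
  have "K$1$3 = 0" "K$2$3 = 0" using e33 by (auto simp: add_nonneg_eq_0_iff)
  hence "K$1$2 = 0" using e11 by simp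
  hence "K = 0" using K11 Ks \<open>K$1$3 = 0\<close> \<open>K$2$3 = 0\<close>
    by (simp add: vec_eq_iff forall_3)
  hence "L = ?X" unfolding K_def by simp
  thus ?thesis using X by (metis C add_diff_cancel_left' diff_add_cancel diff_eq_diff_eq eq_iff_diff_eq_0) 
qed



definition linv :: "bool \<times> 'b \<Rightarrow> bool \<times> 'b" where "linv l = (\<not> fst l, snd l)"

lemma linv_linv[simp]: "linv (linv a) = a" by (simp add: linv_def)
lemma linv_neq[simp]: "linv a \<noteq> a" "a \<noteq> linv a" by (cases a, simp add: linv_def)+
lemma linv_eq_iff[simp]: "linv a = linv b \<longleftrightarrow> a = b" by (cases a, cases b, auto simp: linv_def)
lemma snd_linv[simp]: "snd (linv a) = snd a" by (simp add: linv_def)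

fun act :: "bool \<times> 'b \<Rightarrow> (bool \<times> 'b) list \<Rightarrow> (bool \<times> 'b) list" where
  "act a [] = [a]"
| "act a (b # w) = (if b = linv a then w else a # b # w)"

definition red :: "(bool \<times> 'b) list \<Rightarrow> (bool \<times> 'b) list" where "red w = foldr act w []"

definition winv :: "(bool \<times> 'b) list \<Rightarrow> (bool \<times> 'b) list" where "winv w = rev (map linv w)"

lemma reduced_succ: "reduced_word w \<longleftrightarrow> successively (\<lambda>a b. b \<noteq> linv a) w"
  by (induction w rule: reduced_word.induct) (auto simp: linv_def)

lemma reduced_Cons: "reduced_word (a # w) \<longleftrightarrow> reduced_word w \<and> (w = [] \<or> hd w \<noteq> linv a)"
  by (auto simp: reduced_succ successively_Cons)

lemma reduced_append: "reduced_word (xs @ ys) \<longleftrightarrow> reduced_word xs \<and> reduced_word ys \<and>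
     (xs = [] \<or> ys = [] \<or> hd ys \<noteq> linv (last xs))"
  by (simp add: reduced_succ successively_append_iff)

lemma reduced_winv: "reduced_word (winv w) \<longleftrightarrow> reduced_word w"
  unfolding reduced_succ winv_def successively_rev successively_map
  by (rule successively_cong) (auto simp: linv_def)

lemma winv_Cons: "winv (a # w) = winv w @ [linv a]" by (simp add: winv_def)
lemma winv_append: "winv (u @ v) = winv v @ winv u" by (simp add: winv_def)
lemma winv_Nil[simp]: "winv [] = []" by (simp add: winv_def)
lemma winv_winv[simp]: "winv (winv w) = w" by (simp add: winv_def rev_map comp_def)
lemma length_winv[simp]: "length (winv w) = length w" by (simp add: winv_def)
lemma winv_eq_Nil[simp]: "winv w = [] \<longleftrightarrow> w = []" by (simp add: winv_def)
lemma set_winv: "snd ` set (winv w) = snd ` set w"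
  by (simp add: winv_def image_image)
lemma last_winv: "w \<noteq> [] \<Longrightarrow> last (winv w) = linv (hd w)"
  by (cases w) (auto simp: winv_def)
lemma hd_winv: "w \<noteq> [] \<Longrightarrow> hd (winv w) = linv (last w)"
  by (simp add: winv_def hd_rev last_map)

lemma act_reduced: "reduced_word w \<Longrightarrow> reduced_word (act a w)"
  by (cases w) (auto simp: reduced_Cons)

lemma act_inv: "reduced_word w \<Longrightarrow> act (linv a) (act a w) = w"
proof (cases w)
  case (Cons b w')
  assume r: "reduced_word w"
  show ?thesis
  proof (cases "b = linv a")
    case True
    then show ?thesis using Cons r by (cases w') (auto simp: reduced_Cons)
  next
    case False
    then show ?thesis using Cons by simp
  qed
qed simp

lemma act_cases: "act a w = a # w \<or> (\<exists>w'. w = linv a # w' \<and> act a w = w')"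
  by (cases w) auto

lemma red_Cons[simp]: "red (a # w) = act a (red w)" by (simp add: red_def)
lemma red_Nil[simp]: "red [] = []" by (simp add: red_def)

lemma red_reduced: "reduced_word (red w)"
  by (induction w) (auto intro: act_reduced)

lemma red_id: "reduced_word w \<Longrightarrow> red w = w"
proof (induction w)
  case (Cons a w)
  hence "red w = w" by (simp add: reduced_Cons)
  thus ?case using Cons.prems by (cases w) (auto simp: reduced_Cons)
qed simp

lemma red_append: "red (u @ v) = foldr act u (red v)"
  by (induction u) auto

lemma snd_act: "snd ` set (act a w) \<subseteq> insert (snd a) (snd ` set w)"
  by (cases w) auto

lemma snd_red: "snd ` set (red w) \<subseteq> snd ` set w"
proof (induction w)
  case (Cons a w)
  have "snd ` set (red (a#w)) \<subseteq> insert (snd a) (snd ` set (red w))" using snd_act[of a "red w"] by simp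
  thus ?case using Cons by auto
qed simp

lemma red_len: "red w = w \<or> length (red w) + 2 \<le> length w"
proof (induction w)
  case (Cons a w)
  from act_cases[of a "red w"] show ?case
  proof
    assume "act a (red w) = a # red w"
    thus ?thesis using Cons by auto
  next
    assume "\<exists>w'. red w = linv a # w' \<and> act a (red w) = w'"
    then obtain w' where "red w = linv a # w'" "act a (red w) = w'" by blast
    thus ?thesis using Cons by (cases "red w = w") auto
  qed
qed simp

lemma red_len_lt: "\<not> reduced_word w \<Longrightarrow> length (red w) < length w"
  using red_len[of w] red_reduced[of w] by force

lemma fold_inv: "reduced_word x \<Longrightarrow> foldr act v (foldr act (winv v) x) = x"
proof (induction v arbitrary: x)
  case (Cons a v)
  have "foldr act (winv (a # v)) x = foldr act (winv v) (act (linv a) x)"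
    by (simp add: winv_Cons)
  moreover have "reduced_word (act (linv a) x)" using Cons.prems by (rule act_reduced)
  ultimately show ?case using Cons.IH act_inv[OF Cons.prems, of "linv a"] by simp
qed simp

definition lt :: "bool \<times> (pt \<Rightarrow> pt) \<Rightarrow> pt \<Rightarrow> pt" where
  "lt a = (if fst a then snd a else inv (snd a))"

definition allbij :: "(bool \<times> (pt \<Rightarrow> pt)) list \<Rightarrow> bool" where
  "allbij w \<longleftrightarrow> (\<forall>l\<in>set w. bij (snd l))"

lemma allbij_simps[simp]: "allbij [] " "allbij (a # w) \<longleftrightarrow> bij (snd a) \<and> allbij w"
  "allbij (u @ v) \<longleftrightarrow> allbij u \<and> allbij v"
  by (auto simp: allbij_def)

lemma allbij_winv[simp]: "allbij (winv w) \<longleftrightarrow> allbij w"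
  by (auto simp: allbij_def winv_def linv_def)

lemma we_Cons: "word_eval (a # w) = lt a \<circ> word_eval w"
  by (cases a) (simp add: lt_def)

lemma we_append: "word_eval (u @ v) = word_eval u \<circ> word_eval v"
  by (induction u) (auto simp: we_Cons)

lemma bij_lt: "bij (snd a) \<Longrightarrow> bij (lt a)"
  by (simp add: lt_def bij_imp_bij_inv)

lemma lt_linv: assumes "bij (snd a)"
  shows "lt a \<circ> lt (linv a) = id" "lt (linv a) \<circ> lt a = id"
proof -
  have s: "snd a \<circ> inv (snd a) = id" "inv (snd a) \<circ> snd a = id"
  proof -
    have "surj (snd a)" "inj (snd a)" using assms bij_is_surj bij_is_inj by auto
    thus "snd a \<circ> inv (snd a) = id" "inv (snd a) \<circ> snd a = id" by (simp_all add: surj_iff inv_o_cancel)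
  qed
  show "lt a \<circ> lt (linv a) = id" "lt (linv a) \<circ> lt a = id"
    using s by (auto simp: lt_def linv_def)
qed

lemma inv_lt: "bij (snd a) \<Longrightarrow> inv (lt a) = lt (linv a)"
  using lt_linv inv_unique_comp by blast

lemma we_act: "bij (snd a) \<Longrightarrow> word_eval (act a w) = lt a \<circ> word_eval w"
proof (cases w)
  case (Cons b w')
  assume B: "bij (snd a)"
  show ?thesis
  proof (cases "b = linv a")
    case True
    have "lt a \<circ> word_eval w = (lt a \<circ> lt (linv a)) \<circ> word_eval w'"
      using Cons True by (simp add: we_Cons comp_assoc)
    thus ?thesis using Cons True lt_linv[OF B] by simp
  next
    case False
    thus ?thesis using Cons by (simp add: we_Cons)
  qed
qed (simp add: we_Cons)

lemma we_red: "allbij w \<Longrightarrow> word_eval (red w) = word_eval w"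
  by (induction w) (auto simp: we_act we_Cons)

lemma bij_we: "allbij w \<Longrightarrow> bij (word_eval w)"
  by (induction w) (auto simp: we_Cons bij_lt intro: bij_comp)

lemma we_winv: "allbij w \<Longrightarrow> word_eval (winv w) = inv (word_eval w)"
proof (induction w)
  case (Cons a w)
  have "word_eval (winv (a # w)) = inv (word_eval w) \<circ> lt (linv a)"
    using Cons by (simp add: winv_Cons we_append we_Cons)
  also have "\<dots> = inv (lt a \<circ> word_eval w)"
    using Cons by (simp add: o_inv_distrib bij_lt bij_we inv_lt)
  finally show ?case by (simp only: we_Cons)
qed simp

lemma allbij_S: "\<forall>s\<in>S. bij s \<Longrightarrow> snd ` set w \<subseteq> S \<Longrightarrow> allbij w"
  by (auto simp: allbij_def)

lemma free_elem:
  assumes F: "free_on S G" and x: "x \<in> G" and B: "\<forall>s\<in>S. bij s"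
  shows "\<exists>u. reduced_word u \<and> snd ` set u \<subseteq> S \<and> word_eval u = x"
proof -
  obtain w where w: "set (map snd w) \<subseteq> S" "x = word_eval w" using F x unfolding free_on_def by blast
  have s: "snd ` set (red w) \<subseteq> S" using snd_red[of w] w(1) by (simp only: set_map)
  have "allbij w" using allbij_S[OF B] w(1) by (simp only: set_map)
  hence "word_eval (red w) = x" using w(2) we_red by simp
  thus ?thesis using s red_reduced by blast
qed

lemma free_mem:
  assumes F: "free_on S G" and "snd ` set u \<subseteq> S" shows "word_eval u \<in> G"
  using assms unfolding free_on_def by auto

lemma free_id:
  assumes F: "free_on S G" and "snd ` set u \<subseteq> S" "reduced_word u" "word_eval u = id"
  shows "u = []"
  using assms unfolding free_on_def set_map by blast

lemma free_uniq:
  assumes F: "free_on S G" and B: "\<forall>s\<in>S. bij s"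
    and u: "reduced_word u" "snd ` set u \<subseteq> S" and v: "reduced_word v" "snd ` set v \<subseteq> S"
    and e: "word_eval u = word_eval v"
  shows "u = v"
proof -
  have bu: "allbij u" "allbij v" using allbij_S[OF B] u v by auto
  let ?y = "red (winv v @ u)"
  have y: "?y = foldr act (winv v) u" using red_append[of "winv v" u] red_id[OF u(1)] by simp
  have "word_eval ?y = inv (word_eval v) \<circ> word_eval u"
    using bu by (simp add: we_red we_append we_winv)
  also have "\<dots> = id" using e bij_we[OF bu(2)] by (simp add: bij_is_inj inv_o_cancel)
  finally have "word_eval ?y = id" .
  moreover have "snd ` set ?y \<subseteq> S"
  proof -
    have "snd ` set (winv v @ u) \<subseteq> S" using set_winv[of v] u v by (simp add: image_Un)
    thus ?thesis using snd_red[of "winv v @ u"] by (rule order_trans[rotated])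
  qed
  ultimately have "?y = []" using free_id[OF F] red_reduced by blast
  hence "foldr act v (foldr act (winv v) u) = foldr act v []" using y by simp
  thus ?thesis using fold_inv[OF u(1), of v] red_id[OF v(1)] by (simp add: red_def)
qed

definition pw :: "'a list \<Rightarrow> nat \<Rightarrow> 'a list" where "pw w n = concat (replicate n w)"

lemma pw_0[simp]: "pw w 0 = []" by (simp add: pw_def)
lemma pw_Suc: "pw w (Suc n) = w @ pw w n" by (simp add: pw_def)
lemma pw_len: "length (pw w n) = n * length w" by (induction n) (auto simp: pw_Suc)
lemma pw_add: "pw w (m + n) = pw w m @ pw w n" by (simp add: pw_def replicate_add)
lemma pw_mult: "pw (pw w i) j = pw w (i * j)"
  by (induction j) (auto simp: pw_Suc pw_add[symmetric] add.commute)
lemma pw_comm: "w @ pw w n = pw w n @ w"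
  by (induction n) (auto simp: pw_Suc)
lemma pw_Nil[simp]: "pw [] n = []" by (simp add: pw_def)

lemma pow_comm_words:
  assumes e: "pw x a = pw y b" and a: "a \<ge> 1" and b: "b \<ge> 1"
  shows "x @ y = y @ x"
proof -
  define T where "T = pw x (2*a)"
  have T2: "T = pw y (2*b)" unfolding T_def using e by (simp add: mult_2 pw_add)
  have xT: "x @ T = T @ x" unfolding T_def by (rule pw_comm)
  have yT: "y @ T = T @ y" unfolding T2 by (rule pw_comm)
  have lx: "length x \<le> length (pw x a)" using a pw_len[of x a] by simp
  have ly: "length y \<le> length (pw x a)" using b pw_len[of y b] e by simp
  have lT: "length T = 2 * length (pw x a)" unfolding T_def by (simp add: pw_len)
  obtain m where m: "2*b = Suc m" using b by (cases "2*b") auto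
  obtain k where k: "2*a = Suc k" using a by (cases "2*a") auto
  have Ty: "T = y @ pw y m" using T2 m by (simp add: pw_Suc)
  have Tx: "T = x @ pw x k" using k T_def by (simp add: pw_Suc)
  have "x @ y = take (length x + length y) (x @ T)" using Ty by simp
  also have "\<dots> = take (length x + length y) T" using xT lT lx ly by simp
  finally have 1: "x @ y = take (length x + length y) T" .
  have "y @ x = take (length y + length x) (y @ T)" using Tx by simp
  also have "\<dots> = take (length y + length x) T" using yT lT lx ly by simp
  finally have 2: "y @ x = take (length x + length y) T" by (simp add: add.commute)
  show ?thesis using 1 2 by simp
qed

lemma comm_common:
  assumes "x @ r = r @ x" "y @ r = r @ y" "r \<noteq> []"
  shows "x @ y = y @ x"
proof (cases "x = [] \<or> y = []")
  case False
  obtain m1 n1 w1 where w1: "pw w1 m1 = x" "pw w1 n1 = r"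
    using comm_append_are_replicate[OF assms(1)] unfolding pw_def by blast
  obtain m2 n2 w2 where w2: "pw w2 m2 = y" "pw w2 n2 = r"
    using comm_append_are_replicate[OF assms(2)] unfolding pw_def by blast
  have nz: "m1 \<ge> 1" "n1 \<ge> 1" "m2 \<ge> 1" "n2 \<ge> 1" using w1 w2 False assms(3)
    by (auto simp: Suc_le_eq intro!: Nat.gr0I)
  have "pw x (n1 * m2) = pw w1 (m1 * (n1 * m2))" using pw_mult[of w1 m1 "n1*m2"] w1(1) by simp
  also have "\<dots> = pw r (m1 * m2)" using pw_mult[of w1 n1 "m1*m2"] w1(2) by (simp add: mult_ac)
  also have "\<dots> = pw w2 (n2 * (m1 * m2))" using pw_mult[of w2 n2 "m1*m2"] w2(2) by simp
  also have "\<dots> = pw y (n2 * m1)" using pw_mult[of w2 m2 "n2*m1"] w2(1) by (simp add: mult_ac)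
  finally show ?thesis by (rule pow_comm_words) (use nz in simp_all)
qed auto

lemma comm_root:
  assumes r: "r \<noteq> []" and rho: "\<rho> \<noteq> []" "\<rho> @ r = r @ \<rho>"
    and mn: "\<And>z. z \<noteq> [] \<Longrightarrow> z @ r = r @ z \<Longrightarrow> length \<rho> \<le> length z"
  shows "x @ r = r @ x \<Longrightarrow> \<exists>n. x = pw \<rho> n"
proof (induction "length x" arbitrary: x rule: less_induct)
  case less
  show ?case
  proof (cases "x = []")
    case True thus ?thesis by (intro exI[of _ 0]) simp
  next
    case False
    have le: "length \<rho> \<le> length x" using mn[OF False less.prems] .
    have c: "x @ \<rho> = \<rho> @ x" using comm_common[OF less.prems rho(2) r] .
    have "take (length \<rho>) (x @ \<rho>) = take (length \<rho>) x" using le by simp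
    moreover have "take (length \<rho>) (\<rho> @ x) = \<rho>" by simp
    ultimately have tx: "take (length \<rho>) x = \<rho>" using c by simp
    define x' where "x' = drop (length \<rho>) x"
    have xx: "x = \<rho> @ x'" unfolding x'_def using tx by (metis append_take_drop_id)
    have "\<rho> @ (x' @ r) = \<rho> @ (r @ x')" using less.prems rho(2) xx by (metis append_assoc)
    hence "x' @ r = r @ x'" by simp
    moreover have "length x' < length x" using xx rho(1) by simp
    ultimately obtain n where "x' = pw \<rho> n" using less.hyps by blast
    thus ?thesis using xx by (intro exI[of _ "Suc n"]) (simp add: pw_Suc)
  qed
qed

lemma min_root:
  assumes "r \<noteq> []"
  shows "\<exists>\<rho>. \<rho> \<noteq> [] \<and> \<rho> @ r = r @ \<rho> \<and> snd ` set \<rho> \<subseteq> snd ` set r \<and> (reduced_word r \<longrightarrow> reduced_word \<rho>) \<and>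
    (\<forall>z. z \<noteq> [] \<and> z @ r = r @ z \<longrightarrow> length \<rho> \<le> length z)"
proof -
  let ?P = "\<lambda>n. \<exists>z. z \<noteq> [] \<and> z @ r = r @ z \<and> length z = n"
  have "?P (length r)" using assms by blast
  hence "?P (LEAST n. ?P n)" by (rule LeastI)
  then obtain \<rho> where \<rho>: "\<rho> \<noteq> []" "\<rho> @ r = r @ \<rho>" "length \<rho> = (LEAST n. ?P n)" by blast
  have mn: "\<forall>z. z \<noteq> [] \<and> z @ r = r @ z \<longrightarrow> length \<rho> \<le> length z"
    using \<rho>(3) by (auto intro: Least_le)
  have "length \<rho> \<le> length r" using mn assms by blast
  hence "take (length \<rho>) (r @ \<rho>) = take (length \<rho>) r" by simp
  moreover have "take (length \<rho>) (\<rho> @ r) = \<rho>" by simp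
  ultimately have tr: "\<rho> = take (length \<rho>) r" using \<rho>(2) by metis
  have "set \<rho> \<subseteq> set r" using tr by (metis set_take_subset)
  moreover have "reduced_word \<rho>" if "reduced_word r"
  proof -
    have "reduced_word (take (length \<rho>) r @ drop (length \<rho>) r)" using that by simp
    thus ?thesis using tr reduced_append[of "take (length \<rho>) r" "drop (length \<rho>) r"] by metis
  qed
  ultimately show ?thesis using \<rho> mn by blast
qed

lemma cyc_decomp:
  "reduced_word u \<Longrightarrow> u \<noteq> [] \<Longrightarrow>
    \<exists>p r. u = p @ r @ winv p \<and> r \<noteq> [] \<and> reduced_word r \<and> last r \<noteq> linv (hd r)"
proof (induction "length u" arbitrary: u rule: less_induct)
  case less
  show ?case
  proof (cases "last u = linv (hd u)")
    case False
    thus ?thesis using less.prems by (intro exI[of _ "[]"] exI[of _ u]) simp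
  next
    case True
    obtain a m where u: "u = a # m" using less.prems by (cases u) auto
    have "m \<noteq> []" using True u by auto
    then obtain m' b where m: "m = m' @ [b]" by (metis append_butlast_last_id)
    have b: "b = linv a" using True u m by simp
    have "m' \<noteq> []" using less.prems(1) u m b by (auto simp: reduced_Cons)
    moreover have "reduced_word m'" using less.prems(1) u m by (simp add: reduced_Cons reduced_append)
    moreover have "length m' < length u" using u m by simp
    ultimately obtain p r where pr: "m' = p @ r @ winv p" "r \<noteq> []" "reduced_word r" "last r \<noteq> linv (hd r)"
      using less.hyps by blast
    have "u = (a # p) @ r @ winv (a # p)" using u m b pr(1) by (simp add: winv_Cons)
    thus ?thesis using pr by blast
  qed
qed

lemma red_unique_len:
  assumes F: "free_on S G" and B: "\<forall>s\<in>S. bij s"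
    and u: "reduced_word u" "snd ` set u \<subseteq> S" and v: "snd ` set v \<subseteq> S"
    and e: "word_eval u = word_eval v" and l: "length u = length v"
  shows "reduced_word v"
proof (rule ccontr)
  assume nv: "\<not> reduced_word v"
  have "snd ` set (red v) \<subseteq> S" using snd_red[of v] v by (rule order_trans)
  moreover have "word_eval (red v) = word_eval u" using e we_red allbij_S[OF B v] by simp
  ultimately have "red v = u" using free_uniq[OF F B red_reduced _ u] by blast
  thus False using red_len_lt[OF nv] l by simp
qed

lemma bij_o_inv: "bij f \<Longrightarrow> f \<circ> inv f = id"
  using bij_is_surj surj_iff by blast
lemma bij_inv_o: "bij f \<Longrightarrow> inv f \<circ> f = id"
  using bij_is_inj inv_o_cancel by blast

lemma comm_inv:
  assumes "bij X" "X \<circ> R = R \<circ> X" shows "inv X \<circ> R = R \<circ> inv X"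
proof (rule ext)
  fix y
  have c: "X (R z) = R (X z)" for z using assms(2) by (metis comp_apply)
  have "X (R (inv X y)) = R y" using c[of "inv X y"] assms(1) by (simp add: bij_is_surj surj_f_inv_f)
  hence "inv X (R y) = R (inv X y)" using assms(1) by (metis bij_is_inj inv_f_f)
  thus "(inv X \<circ> R) y = (R \<circ> inv X) y" by simp
qed

lemma comm_cyc_words:
  assumes F: "free_on S G" and B: "\<forall>s\<in>S. bij s"
    and r: "r \<noteq> []" "reduced_word r" "last r \<noteq> linv (hd r)" "snd ` set r \<subseteq> S"
    and x: "reduced_word x" "snd ` set x \<subseteq> S"
    and c: "word_eval x \<circ> word_eval r = word_eval r \<circ> word_eval x"
  shows "x @ r = r @ x \<or> winv x @ r = r @ winv x"
proof -
  have Wb: "y @ r = r @ y"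
    if y: "reduced_word y" "snd ` set y \<subseteq> S" "word_eval y \<circ> word_eval r = word_eval r \<circ> word_eval y"
      and yr: "reduced_word (y @ r)" for y
  proof -
    have s1: "snd ` set (y @ r) \<subseteq> S" "snd ` set (r @ y) \<subseteq> S" using y(2) r(4) by auto
    have e: "word_eval (y @ r) = word_eval (r @ y)" using y(3) by (simp add: we_append)
    have "reduced_word (r @ y)" by (rule red_unique_len[OF F B yr s1 e]) simp
    thus ?thesis using free_uniq[OF F B yr s1(1) _ s1(2) e] by blast
  qed
  show ?thesis
  proof (cases "reduced_word (x @ r)")
    case True
    thus ?thesis using Wb[OF x c] by blast
  next
    case False
    have s1: "snd ` set (x @ r) \<subseteq> S" "snd ` set (r @ x) \<subseteq> S" using x(2) r(4) by auto
    have e: "word_eval (r @ x) = word_eval (x @ r)" using c by (simp add: we_append)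
    have nrx: "\<not> reduced_word (r @ x)"
      using red_unique_len[OF F B _ s1(2) s1(1) e] False by auto
    have xne: "x \<noteq> []" using False r x by (auto simp: reduced_append)
    have h1: "hd x = linv (last r)" using nrx r x xne by (auto simp: reduced_append)
    let ?y = "winv x"
    have bX: "bij (word_eval x)" using bij_we allbij_S[OF B x(2)] by blast
    have yev: "word_eval ?y = inv (word_eval x)" using we_winv allbij_S[OF B x(2)] by blast
    have y: "reduced_word ?y" "snd ` set ?y \<subseteq> S"
      using x set_winv[of x] by (auto simp: reduced_winv)
    have yc: "word_eval ?y \<circ> word_eval r = word_eval r \<circ> word_eval ?y"
      using comm_inv[OF bX c] yev by simp
    have "hd r \<noteq> hd x"
    proof
      assume "hd r = hd x"
      hence "last r = linv (hd r)" using h1 by simp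
      thus False using r(3) by simp
    qed
    hence "reduced_word (?y @ r)" using y r xne by (auto simp: reduced_append last_winv)
    thus ?thesis using Wb[OF y yc] by blast
  qed
qed

lemma funpow_inv: fixes f :: "'a \<Rightarrow> 'a" shows "bij f \<Longrightarrow> inv (f ^^ n) = inv f ^^ n"
proof (induction n)
  case 0 thus ?case by (simp add: inv_id)
next
  case (Suc n)
  have "bij (f ^^ n)" using Suc.prems by (simp add: bij_fn)
  hence "inv (f ^^ Suc n) = inv f \<circ> inv (f ^^ n)"
    using Suc.prems by (simp add: o_inv_distrib funpow_Suc_right del: funpow.simps)
  also have "\<dots> = inv f ^^ Suc n" using Suc.IH[OF Suc.prems] by simp
  finally show ?case .
qed

lemma conj_pow: fixes f P :: "'a \<Rightarrow> 'a" shows "bij P \<Longrightarrow> P \<circ> f ^^ n \<circ> inv P = (P \<circ> f \<circ> inv P) ^^ n"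
proof (induction n)
  case 0 thus ?case by (simp add: fun_eq_iff bij_is_surj surj_f_inv_f)
next
  case (Suc n)
  have "(P \<circ> f \<circ> inv P) ^^ Suc n = (P \<circ> f \<circ> inv P) \<circ> (P \<circ> f \<circ> inv P) ^^ n"
    by (simp only: funpow.simps)
  also have "\<dots> = (P \<circ> f \<circ> inv P) \<circ> (P \<circ> f ^^ n \<circ> inv P)"
    by (simp only: Suc.IH[OF Suc.prems])
  also have "\<dots> = P \<circ> f ^^ Suc n \<circ> inv P"
    using Suc.prems by (simp add: fun_eq_iff bij_is_inj inv_f_f)
  finally show ?case by (rule sym)
qed

lemma we_pw: "word_eval (pw w n) = word_eval w ^^ n"
  by (induction n) (auto simp: pw_Suc we_append)

theorem centralizer:
  assumes F: "free_on S G" and B: "\<forall>s\<in>S. bij s" and z: "z \<in> G" "z \<noteq> id"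
  shows "\<exists>c. bij c \<and> (\<forall>x\<in>G. x \<circ> z = z \<circ> x \<longrightarrow> (\<exists>n. x = c ^^ n \<or> x = inv c ^^ n))"
proof -
  obtain u where u: "reduced_word u" "snd ` set u \<subseteq> S" "word_eval u = z"
    using free_elem[OF F z(1) B] by blast
  have "u \<noteq> []" using u z(2) by auto
  then obtain p r where pr: "u = p @ r @ winv p" "r \<noteq> []" "reduced_word r" "last r \<noteq> linv (hd r)"
    using cyc_decomp[OF u(1)] by blast
  have gp: "snd ` set p \<subseteq> S" and gr: "snd ` set r \<subseteq> S" using u(2) pr(1) by auto
  obtain \<rho> where \<rho>: "\<rho> \<noteq> []" "\<rho> @ r = r @ \<rho>" "snd ` set \<rho> \<subseteq> snd ` set r"
     "\<forall>z. z \<noteq> [] \<and> z @ r = r @ z \<longrightarrow> length \<rho> \<le> length z"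
    using min_root[OF pr(2)] by blast
  define P where "P = word_eval p"
  define R where "R = word_eval r"
  define C where "C = word_eval \<rho>"
  have bP: "bij P" unfolding P_def using bij_we allbij_S[OF B gp] by blast
  have bC: "bij C" unfolding C_def using bij_we allbij_S[OF B] \<rho>(3) gr by (meson order_trans)
  have zPR: "z = P \<circ> R \<circ> inv P"
    using u(3) pr(1) allbij_S[OF B gp] by (simp add: P_def R_def we_append we_winv comp_assoc)
  define c where "c = P \<circ> C \<circ> inv P"
  have bc: "bij c" unfolding c_def using bP bC by (simp add: bij_comp bij_imp_bij_inv)
  have ic: "inv c = P \<circ> inv C \<circ> inv P"
    unfolding c_def using bP bC
    by (simp add: o_inv_distrib bij_comp bij_imp_bij_inv inv_inv_eq comp_assoc)
  have "\<exists>n. x = c ^^ n \<or> x = inv c ^^ n" if x: "x \<in> G" "x \<circ> z = z \<circ> x" for x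
  proof -
    obtain wx where wx: "reduced_word wx" "snd ` set wx \<subseteq> S" "word_eval wx = x"
      using free_elem[OF F x(1) B] by blast
    have "snd ` set (winv p @ wx @ p) \<subseteq> S" using gp wx(2) set_winv[of p] by (simp add: image_Un)
    hence "word_eval (winv p @ wx @ p) \<in> G" by (rule free_mem[OF F])
    moreover have "word_eval (winv p @ wx @ p) = inv P \<circ> x \<circ> P"
      using allbij_S[OF B gp] wx(3) by (simp add: P_def we_append we_winv comp_assoc)
    ultimately have x'G: "inv P \<circ> x \<circ> P \<in> G" by simp
    obtain v where v: "reduced_word v" "snd ` set v \<subseteq> S" "word_eval v = inv P \<circ> x \<circ> P"
      using free_elem[OF F x'G B] by blast
    have cx: "x (P (R (inv P y))) = P (R (inv P (x y)))" for y
      using x(2) zPR by (metis comp_apply)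
    have vc: "word_eval v \<circ> word_eval r = word_eval r \<circ> word_eval v"
    proof (rule ext)
      fix y
      have "x (P (R y)) = P (R (inv P (x (P y))))"
        using cx[of "P y"] bP by (simp add: bij_is_inj inv_f_f)
      hence "inv P (x (P (R y))) = R (inv P (x (P y)))" using bP by (simp add: bij_is_inj inv_f_f)
      thus "(word_eval v \<circ> word_eval r) y = (word_eval r \<circ> word_eval v) y"
        using v(3) by (simp add: R_def)
    qed
    have xback: "x = P \<circ> word_eval v \<circ> inv P"
      using v(3) bP by (simp add: fun_eq_iff bij_is_surj surj_f_inv_f)
    from comm_cyc_words[OF F B pr(2-4) gr v(1,2) vc]
    show ?thesis
    proof
      assume "v @ r = r @ v"
      then obtain n where "v = pw \<rho> n" using comm_root[OF pr(2) \<rho>(1,2)] \<rho>(4) by blast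
      hence "word_eval v = C ^^ n" by (simp add: C_def we_pw)
      hence "x = c ^^ n" using xback conj_pow[OF bP] by (simp add: c_def)
      thus ?thesis by blast
    next
      assume "winv v @ r = r @ winv v"
      then obtain n where "winv v = pw \<rho> n" using comm_root[OF pr(2) \<rho>(1,2)] \<rho>(4) by blast
      hence "inv (word_eval v) = C ^^ n"
        using we_winv[of v] allbij_S[OF B v(2)] by (simp add: C_def we_pw)
      moreover have "bij (word_eval v)" using bij_we allbij_S[OF B v(2)] by blast
      ultimately have "word_eval v = inv (C ^^ n)" by (metis inv_inv_eq)
      hence "word_eval v = inv C ^^ n" using funpow_inv[OF bC] by simp
      hence "x = inv c ^^ n" using xback conj_pow[OF bP] ic by simp
      thus ?thesis by blast
    qed
  qed
  thus ?thesis using bc by blast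
qed



definition aff :: "real^3^3 \<Rightarrow> pt \<Rightarrow> pt \<Rightarrow> pt" where "aff A b = (\<lambda>x. A *v x + b)"
definition tr :: "pt \<Rightarrow> pt \<Rightarrow> pt" where "tr v = (\<lambda>x. x + v)"

lemma aff_comp: "aff A b \<circ> aff B c = aff (A ** B) (A *v c + b)"
  by (simp add: aff_def fun_eq_iff matrix_vector_mul_assoc matrix_vector_right_distrib algebra_simps)

lemma aff_eq: assumes "aff A b = aff B c" shows "A = B" "b = c"
proof -
  have e: "A *v x + b = B *v x + c" for x using assms by (metis aff_def)
  show bc: "b = c" using e[of 0] by simp
  have "A *v x = B *v x" for x using e[of x] bc by simp
  thus "A = B" by (simp add: matrix_eq)
qed

lemma aff_id: "id = aff (mat 1) 0" by (simp add: aff_def fun_eq_iff)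

lemma aff_tr: "aff A b \<circ> tr v = tr (A *v v) \<circ> aff A b"
  by (simp add: aff_def tr_def fun_eq_iff matrix_vector_right_distrib algebra_simps)

lemma tr_comp: "tr v \<circ> tr v' = tr (v + v')" by (simp add: tr_def fun_eq_iff algebra_simps)
lemma tr_0: "tr 0 = id" by (simp add: tr_def fun_eq_iff)
lemma tr_pow: "tr v ^^ n = tr (real n *\<^sub>R v)"
  by (induction n) (auto simp: tr_0 tr_comp algebra_simps)
lemma tr_inj: "tr v = tr v' \<Longrightarrow> v = v'" by (metis tr_def add_0)
lemma bij_tr: "bij (tr v)"
  by (rule bij_betw_byWitness[of _ "tr (-v)"]) (auto simp: tr_def)
lemma inv_tr: "inv (tr v) = tr (-v)"
  by (rule inv_unique_comp) (simp_all add: tr_comp tr_0)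

lemma O21_det: assumes "A \<in> O21" shows "det A = 1 \<or> det A = -1"
proof -
  have "det (Xm A) * det A = 1" using Xm_left[OF assms] by (metis det_mul det_I)
  moreover have "det (Xm A) = det A" by (simp add: det3_expl Xm_def algebra_simps)
  ultimately have "det A * det A = 1" by simp
  hence "(det A - 1) * (det A + 1) = 0" by (simp add: algebra_simps)
  thus ?thesis by (simp add: eq_neg_iff_add_eq_0)
qed

lemma O21_right: assumes "A \<in> O21" shows "A ** Xm A = mat 1"
  using Xm_left[OF assms] matrix_left_right_inverse1 by blast

lemma bij_aff: assumes "A \<in> O21" shows "bij (aff A b)"
proof (rule bij_betw_byWitness[of _ "\<lambda>y. Xm A *v (y - b)"])
  show "\<forall>x\<in>UNIV. Xm A *v (aff A b x - b) = x"
    by (simp add: aff_def matrix_vector_mul_assoc Xm_left[OF assms])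
  show "\<forall>y\<in>UNIV. aff A b (Xm A *v (y - b)) = y"
    by (simp add: aff_def matrix_vector_mul_assoc O21_right[OF assms])
qed auto

lemma lor_iso: "lorentz_isometry f \<Longrightarrow> \<exists>A b. A \<in> O21 \<and> f = aff A b"
  unfolding lorentz_isometry_def aff_def by blast

lemma invol_fix: assumes "aff A b \<circ> aff A b = id"
  shows "aff A b ((1/2) *\<^sub>R b) = (1/2) *\<^sub>R b"
proof -
  have "A *v (A *v 0 + b) + b = 0" using assms by (metis aff_def comp_apply id_apply)
  hence "A *v b = - b" by (simp add: algebra_simps eq_neg_iff_add_eq_0)
  thus ?thesis by (simp add: aff_def matrix_vector_mult_scaleR)
qed



lemma pow_comm_gen: "f ^^ a \<circ> f ^^ b = f ^^ b \<circ> f ^^ a"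
  by (simp add: funpow_add[symmetric] add.commute)

lemma pow_comm:
  assumes bc: "bij c" and x: "x = c ^^ a \<or> x = inv c ^^ a" and y: "y = c ^^ b \<or> y = inv c ^^ b"
  shows "x \<circ> y = y \<circ> x"
proof -
  have ba: "bij (c ^^ a)" "bij (c ^^ b)" using bc by (simp_all add: bij_fn)
  have i: "inv c ^^ n = inv (c ^^ n)" for n using funpow_inv[OF bc] by simp
  have c1: "c ^^ a \<circ> inv (c ^^ b) = inv (c ^^ b) \<circ> c ^^ a"
    using comm_inv[OF ba(2) pow_comm_gen[where f=c and a=b and b=a]] by simp
  have c2: "c ^^ b \<circ> inv (c ^^ a) = inv (c ^^ a) \<circ> c ^^ b"
    using comm_inv[OF ba(1) pow_comm_gen[where f=c and a=a and b=b]] by simp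
  have c3: "inv c ^^ a \<circ> inv c ^^ b = inv c ^^ b \<circ> inv c ^^ a" by (rule pow_comm_gen)
  from x y show ?thesis
  proof (elim disjE)
    assume "x = inv c ^^ a" "y = inv c ^^ b" thus ?thesis using c3 by simp
  qed (simp_all add: pow_comm_gen i c1 c2)
qed

lemma pow_rel:
  assumes bc: "bij c" and t: "t = c ^^ m \<or> t = inv c ^^ m" and s: "s = c ^^ n \<or> s = inv c ^^ n"
  shows "t ^^ n = s ^^ m \<or> t ^^ n = inv (s ^^ m)"
proof -
  have i: "inv c ^^ k = inv (c ^^ k)" for k using funpow_inv[OF bc] by simp
  have ii: "inv (inv (c ^^ k)) = c ^^ k" for k using bc by (simp add: bij_fn inv_inv_eq)
  from t s show ?thesis
    by (elim disjE) (simp_all only: funpow_mult; simp add: i ii mult.commute)+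
qed

lemma comm_pow: "f \<circ> g = g \<circ> f \<Longrightarrow> f \<circ> g ^^ n = g ^^ n \<circ> f"
proof (induction n)
  case (Suc n)
  have "f \<circ> g ^^ Suc n = (f \<circ> g) \<circ> g ^^ n" by (simp add: comp_assoc)
  also have "\<dots> = (g \<circ> f) \<circ> g ^^ n" by (simp only: Suc.prems)
  also have "\<dots> = g \<circ> (f \<circ> g ^^ n)" by (simp only: comp_assoc)
  also have "\<dots> = g ^^ Suc n \<circ> f" by (simp only: Suc.IH[OF Suc.prems] funpow.simps comp_assoc)
  finally show ?case .
qed simp

lemma mv_neg: "(A::real^3^3) *v (- x) = - (A *v x)"
  by (simp add: vec_eq_iff matrix_vector_mult_def sum_negf)

lemma neg_self: "- (v::pt) = v \<Longrightarrow> v = 0"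
  by (auto simp: vec_eq_iff)

theorem lemma4p1:
  fixes G :: "(real ^ 3 \<Rightarrow> real ^ 3) set"
  assumes "margulis_group G" and "nonabelian G"
  shows "orientable_quotient G"
proof (rule ccontr)
  assume nor: "\<not> orientable_quotient G"
  have isoG: "isometry_group G" and frG: "free_group G" and prp: "acts_properly G"
    and frA: "acts_freely G" using assms(1) unfolding margulis_group_def by auto
  have rep: "\<exists>A b. A \<in> O21 \<and> f = aff A b" if "f \<in> G" for f
    using isoG that lor_iso unfolding isometry_group_def by blast
  have bijG: "bij f" if "f \<in> G" for f using rep[OF that] bij_aff by blast
  have compG: "f \<circ> h \<in> G" if "f \<in> G" "h \<in> G" for f h
    using isoG that unfolding isometry_group_def by blast
  have invG: "inv f \<in> G" if "f \<in> G" for f using isoG that unfolding isometry_group_def by blast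
  have idG: "id \<in> G" using isoG unfolding isometry_group_def by blast
  have powG: "f ^^ n \<in> G" if "f \<in> G" for f n
  proof (induction n)
    case 0 show ?case using idG by (simp only: funpow.simps)
  next
    case (Suc n) show ?case using compG[OF that Suc.IH] by (simp only: funpow.simps)
  qed
  have fixid: "f = id" if "f \<in> G" "f x = x" for f x using frA that unfolding acts_freely_def by blast
  have affid: "A = mat 1" if "aff A b = id" for A b using aff_eq(1)[of A b "mat 1" 0] that aff_id by simp
  have invol: "f = id" if fG: "f \<in> G" and ff: "f \<circ> f = id" for f
  proof -
    obtain A b where Ab: "A \<in> O21" "f = aff A b" using rep[OF fG] by blast
    thus ?thesis using invol_fix[of A b] ff fixid[OF fG] by blast
  qed
  obtain S where F: "free_on S G" using frG unfolding free_group_def by blast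
  have B: "\<forall>s\<in>S. bij s" using F bijG unfolding free_on_def by blast
  obtain g where gG: "g \<in> G" and gn: "\<forall>A b. g = (\<lambda>x. A *v x + b) \<longrightarrow> \<not> det A > 0"
    using nor unfolding orientable_quotient_def by blast
  obtain A b where AO: "A \<in> O21" and gA: "g = aff A b" using rep[OF gG] by blast
  have "g = (\<lambda>x. A *v x + b)" using gA by (simp add: aff_def)
  hence "\<not> det A > 0" using gn by blast
  hence dA: "det A = -1" using O21_det[OF AO] by linarith
  have gnid: "g \<noteq> id"
  proof
    assume "g = id" hence "A = mat 1" using affid gA by simp
    thus False using dA by simp
  qed
  have "\<exists>u. u \<noteq> 0 \<and> A *v u = u"
  proof (rule ccontr)
    assume "\<not> (\<exists>u. u \<noteq> 0 \<and> A *v u = u)"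
    hence "inj ((*v) (A - mat 1))" unfolding vec.inj_iff_eq_0
      by (auto simp: matrix_vector_mult_diff_rdistrib)
    then obtain M where "M ** (A - mat 1) = mat 1" using matrix_left_invertible_injective by blast
    hence M: "(A - mat 1) ** M = mat 1" by (rule matrix_left_right_inverse1)
    define x0 where "x0 = M *v (- b)"
    have "(A - mat 1) *v x0 = - b" unfolding x0_def using M by (simp add: matrix_vector_mul_assoc)
    hence "g x0 = x0" unfolding gA aff_def by (simp add: matrix_vector_mult_diff_rdistrib algebra_simps)
    thus False using fixid[OF gG] gnid by blast
  qed
  then obtain u where u: "u \<noteq> 0" "A *v u = u" by blast
  have AA: "A ** A = mat 1" by (rule refl_sq[OF AO dA u])
  define w where "w = A *v b + b"
  have gg: "g \<circ> g = tr w" unfolding gA aff_comp AA w_def by (simp add: aff_def tr_def)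
  have tG: "tr w \<in> G" using compG[OF gG gG] gg by simp
  have wnz: "w \<noteq> 0"
  proof
    assume "w = 0" hence "g \<circ> g = id" using gg tr_0 by simp
    thus False using invol[OF gG] gnid by blast
  qed
  have tnid: "tr w \<noteq> id"
  proof
    assume "tr w = id" hence "tr w = tr 0" using tr_0 by simp
    hence "w = 0" by (rule tr_inj)
    thus False using wnz by simp
  qed
  obtain c where bc: "bij c"
    and cen: "\<forall>x\<in>G. x \<circ> tr w = tr w \<circ> x \<longrightarrow> (\<exists>n. x = c ^^ n \<or> x = inv c ^^ n)"
    using centralizer[OF F B tG tnid] by blast
  obtain m where tm: "tr w = c ^^ m \<or> tr w = inv c ^^ m" using cen tG by blast
  have mnz: "m \<noteq> 0" using tm tnid by auto
  have conj: "h \<circ> tr v \<circ> inv h = tr (B *v v)" if "B \<in> O21" "h = aff B b'" for h B b' v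
  proof -
    have "h \<circ> tr v \<circ> inv h = tr (B *v v) \<circ> (h \<circ> inv h)" using aff_tr that by (simp add: comp_assoc)
    thus ?thesis using bij_o_inv[OF bij_aff[OF that(1)]] that(2) by simp
  qed
  have lam: "\<exists>la. B *v w = la *\<^sub>R w" if hG: "h \<in> G" and hB: "B \<in> O21" "h = aff B b'" for h B b'
  proof -
    have sG: "tr (B *v w) \<in> G" using conj[OF hB, of w] compG[OF compG[OF hG tG] invG[OF hG]] by simp
    have "tr (B *v w) \<circ> tr w = tr w \<circ> tr (B *v w)" by (simp add: tr_comp add.commute)
    then obtain n where sn: "tr (B *v w) = c ^^ n \<or> tr (B *v w) = inv c ^^ n" using cen sG by blast
    from pow_rel[OF bc tm sn]
    have "tr (real n *\<^sub>R w) = tr (real m *\<^sub>R (B *v w)) \<or> tr (real n *\<^sub>R w) = tr (- (real m *\<^sub>R (B *v w)))"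
      by (simp add: tr_pow inv_tr)
    hence "real n *\<^sub>R w = real m *\<^sub>R (B *v w) \<or> real n *\<^sub>R w = - (real m *\<^sub>R (B *v w))"
      using tr_inj by blast
    moreover have m0: "real m \<noteq> 0" using mnz by simp
    have inv_m: "B *v w = (1 / real m) *\<^sub>R (real m *\<^sub>R (B *v w))" using m0 by simp
    ultimately show ?thesis
    proof (elim disjE)
      assume e: "real n *\<^sub>R w = real m *\<^sub>R (B *v w)"
      have "B *v w = (1 / real m) *\<^sub>R (real n *\<^sub>R w)" using inv_m e by simp
      thus ?thesis by (intro exI[of _ "(1 / real m) * real n"]) simp
    next
      assume e: "real n *\<^sub>R w = - (real m *\<^sub>R (B *v w))"
      hence "real m *\<^sub>R (B *v w) = - (real n *\<^sub>R w)" by simp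
      hence "B *v w = (1 / real m) *\<^sub>R (- (real n *\<^sub>R w))" using inv_m by simp
      thus ?thesis by (intro exI[of _ "- ((1 / real m) * real n)"]) simp
    qed
  qed
  have big: "1 \<le> \<bar>la\<bar>" if hG: "h \<in> G" and hB: "B \<in> O21" "h = aff B b'" and hl: "B *v w = la *\<^sub>R w"
    for h B b' la
  proof (rule ccontr)
    assume "\<not> 1 \<le> \<bar>la\<bar>"
    hence l1: "\<bar>la\<bar> < 1" by simp
    have "la \<noteq> 0"
    proof
      assume "la = 0"
      hence "B *v w = 0" using hl by simp
      hence "Xm B *v (B *v w) = 0" by simp
      thus False using Xm_left[OF hB(1)] wnz by (simp add: matrix_vector_mul_assoc)
    qed
    hence l0: "0 < \<bar>la\<bar>" by simp
    have hk: "h ^^ k \<circ> tr w = tr ((la ^ k) *\<^sub>R w) \<circ> h ^^ k" for k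
    proof (induction k)
      case 0 thus ?case by (simp add: tr_def)
    next
      case (Suc k)
      have "h ^^ Suc k \<circ> tr w = h \<circ> (h ^^ k \<circ> tr w)" by (simp add: comp_assoc)
      also have "\<dots> = (h \<circ> tr ((la ^ k) *\<^sub>R w)) \<circ> h ^^ k" by (simp only: Suc.IH comp_assoc)
      also have "\<dots> = tr ((la ^ Suc k) *\<^sub>R w) \<circ> h ^^ Suc k"
        using aff_tr[of B b' "(la ^ k) *\<^sub>R w"] hB(2) hl
        by (simp add: comp_assoc matrix_vector_mult_scaleR mult.commute)
      finally show ?case .
    qed
    have trG: "tr ((la ^ k) *\<^sub>R w) \<in> G" for k
    proof -
      have bk: "bij (h ^^ k)" using bijG[OF hG] by (simp add: bij_fn)
      have "h ^^ k \<circ> tr w \<circ> inv (h ^^ k) = tr ((la ^ k) *\<^sub>R w)"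
        using hk[of k] bij_o_inv[OF bk] by (simp add: comp_assoc)
      moreover have "h ^^ k \<circ> tr w \<circ> inv (h ^^ k) \<in> G"
        using compG[OF compG[OF powG[OF hG] tG] invG[OF powG[OF hG]]] by simp
      ultimately show ?thesis by simp
    qed
    define K where "K = cball (0::pt) (norm w)"
    have fin: "finite {f\<in>G. f ` K \<inter> K \<noteq> {}}" using prp unfolding acts_properly_def K_def by simp
    have sub: "range (\<lambda>k. tr ((la ^ k) *\<^sub>R w)) \<subseteq> {f\<in>G. f ` K \<inter> K \<noteq> {}}"
    proof safe
      fix k
      show "tr ((la ^ k) *\<^sub>R w) \<in> G" by (rule trG)
      have "\<bar>la\<bar> ^ k \<le> 1" using l1 by (simp add: power_le_one)
      hence "norm ((la ^ k) *\<^sub>R w) \<le> norm w" by (simp add: power_abs mult_left_le_one_le)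
      hence "(la ^ k) *\<^sub>R w \<in> tr ((la ^ k) *\<^sub>R w) ` K \<inter> K"
        unfolding K_def by (auto simp: tr_def image_iff intro!: bexI[of _ 0])
      moreover assume "tr ((la ^ k) *\<^sub>R w) ` K \<inter> K = {}"
      ultimately show False by blast
    qed
    have "inj (\<lambda>k. tr ((la ^ k) *\<^sub>R w))"
    proof (rule injI)
      fix k j assume "tr ((la ^ k) *\<^sub>R w) = tr ((la ^ j) *\<^sub>R w)"
      hence "(la ^ k) *\<^sub>R w = (la ^ j) *\<^sub>R w" by (rule tr_inj)
      hence "la ^ k = la ^ j" using scale_cancel_right[of "la ^ k" w "la ^ j"] wnz by simp
      hence e: "\<bar>la\<bar> ^ k = \<bar>la\<bar> ^ j" by (simp add: power_abs[symmetric])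
      show "k = j"
      proof (rule ccontr)
        assume "k \<noteq> j"
        hence "k < j \<or> j < k" by arith
        thus False
        proof
          assume "k < j" hence "\<bar>la\<bar> ^ j < \<bar>la\<bar> ^ k" using power_strict_decreasing_iff[OF l0 l1] by blast
          thus False using e by simp
        next
          assume "j < k" hence "\<bar>la\<bar> ^ k < \<bar>la\<bar> ^ j" using power_strict_decreasing_iff[OF l0 l1] by blast
          thus False using e by simp
        qed
      qed
    qed
    hence "infinite (range (\<lambda>k. tr ((la ^ k) *\<^sub>R w)))" by (rule range_inj_infinite)
    thus False using fin sub finite_subset by blast
  qed
  have pm: "B *v w = w \<or> B *v w = - w" if hG: "h \<in> G" and hB: "B \<in> O21" "h = aff B b'" for h B b'
  proof -
    obtain la where l: "B *v w = la *\<^sub>R w" using lam[OF hG hB] by blast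
    have la: "1 \<le> \<bar>la\<bar>" by (rule big[OF hG hB l])
    obtain B' b'' where h'B: "B' \<in> O21" "inv h = aff B' b''" using rep[OF invG[OF hG]] by blast
    obtain mu where mu: "B' *v w = mu *\<^sub>R w" using lam[OF invG[OF hG] h'B] by blast
    have mua: "1 \<le> \<bar>mu\<bar>" by (rule big[OF invG[OF hG] h'B mu])
    have "aff (B' ** B) (B' *v b' + b'') = aff (mat 1) 0"
      using aff_comp[of B' b'' B b'] h'B hB bij_inv_o[OF bijG[OF hG]] aff_id by simp
    hence BB: "B' ** B = mat 1" by (rule aff_eq)
    have "w = B' *v (B *v w)" using BB by (simp add: matrix_vector_mul_assoc)
    also have "\<dots> = (la * mu) *\<^sub>R w" using l mu by (simp add: matrix_vector_mult_scaleR)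
    finally have "(la * mu) *\<^sub>R w = 1 *\<^sub>R w" by simp
    hence "la * mu = 1" using wnz by (simp only: scale_cancel_right) simp
    hence "\<bar>la\<bar> * \<bar>mu\<bar> = 1" by (simp add: abs_mult[symmetric])
    moreover have "\<bar>la\<bar> * 1 \<le> \<bar>la\<bar> * \<bar>mu\<bar>" by (rule mult_left_mono) (use mua in auto)
    ultimately have "\<bar>la\<bar> = 1" using la by linarith
    thus ?thesis using l by (cases "la \<ge> 0") auto
  qed
  have central: "h \<circ> tr w = tr w \<circ> h" if hG: "h \<in> G" for h
  proof -
    obtain B b' where hB: "B \<in> O21" "h = aff B b'" using rep[OF hG] by blast
    from pm[OF hG hB] show ?thesis
    proof
      assume "B *v w = w" thus ?thesis using aff_tr[of B b' w] hB by simp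
    next
      assume Bw: "B *v w = - w"
      define H where "H = h \<circ> h"
      have HG: "H \<in> G" unfolding H_def using compG hG by blast
      have trh: "h \<circ> tr v = tr (B *v v) \<circ> h" for v using aff_tr hB by simp
      have "H \<circ> tr w = h \<circ> (tr (- w) \<circ> h)" unfolding H_def using trh[of w] Bw by (simp add: comp_assoc)
      also have "\<dots> = tr w \<circ> H" unfolding H_def using trh[of "- w"] Bw
        by (simp add: comp_assoc[symmetric] mv_neg)
      finally have "H \<circ> tr w = tr w \<circ> H" .
      then obtain k where Hk: "H = c ^^ k \<or> H = inv c ^^ k" using cen HG by blast
      have hH: "h \<circ> H ^^ m = H ^^ m \<circ> h"
        by (rule comm_pow) (simp add: H_def comp_assoc)
      have bHm: "bij (H ^^ m)" using bijG[OF HG] by (simp add: bij_fn)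
      have hHi: "h \<circ> inv (H ^^ m) = inv (H ^^ m) \<circ> h"
        using comm_inv[OF bHm hH[symmetric]] by simp
      have "tr w ^^ k = H ^^ m \<or> tr w ^^ k = inv (H ^^ m)" by (rule pow_rel[OF bc tm Hk])
      hence "h \<circ> tr w ^^ k = tr w ^^ k \<circ> h" using hH hHi by auto
      hence eqh: "tr (- (real k *\<^sub>R w)) \<circ> h = tr (real k *\<^sub>R w) \<circ> h"
        using trh[of "real k *\<^sub>R w"] Bw by (simp add: tr_pow matrix_vector_mult_scaleR)
      have "tr (- (real k *\<^sub>R w)) = tr (real k *\<^sub>R w)"
      proof -
        have hi: "h \<circ> inv h = id" using bij_o_inv[OF bijG[OF hG]] .
        have "tr (- (real k *\<^sub>R w)) = (tr (- (real k *\<^sub>R w)) \<circ> h) \<circ> inv h" by (simp add: comp_assoc hi)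
        also have "\<dots> = (tr (real k *\<^sub>R w) \<circ> h) \<circ> inv h" using eqh by simp
        also have "\<dots> = tr (real k *\<^sub>R w)" by (simp add: comp_assoc hi)
        finally show ?thesis .
      qed
      hence "- (real k *\<^sub>R w) = real k *\<^sub>R w" by (rule tr_inj)
      hence "real k *\<^sub>R w = 0" by (rule neg_self)
      hence "k = 0" using wnz by simp
      hence "H = id" using Hk by simp
      hence "h = id" using invol[OF hG] unfolding H_def by blast
      hence "B = mat 1" using hB affid by simp
      hence "- w = w" using Bw by simp
      thus ?thesis using wnz neg_self by blast
    qed
  qed
  obtain x y where xy: "x \<in> G" "y \<in> G" "x \<circ> y \<noteq> y \<circ> x" using assms(2) unfolding nonabelian_def by blast
  have "x \<circ> tr w = tr w \<circ> x" using central[OF xy(1)] .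
  then obtain a where xa: "x = c ^^ a \<or> x = inv c ^^ a" using cen xy(1) by blast
  have "y \<circ> tr w = tr w \<circ> y" using central[OF xy(2)] .
  then obtain b2 where yb: "y = c ^^ b2 \<or> y = inv c ^^ b2" using cen xy(2) by blast
  have "x \<circ> y = y \<circ> x" by (rule pow_comm[OF bc xa yb])
  thus False using xy(3) by blast
qed


end
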